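(* Let $n\ge 2$, let $G=K_n$ on vertices $v_1,\dots,v_n$ with edge weights $w_{\{i,j\}}\in(0,1)$, and let $\alpha\in(0,1)$. Then $\operatorname{cptw}(G,\alpha)=\left\lceil \log_{P_0}(1-\alpha)\right\rceil$, where $P_0=\min_{1\le i\le n}\prod_{j\ne i}(1-w_{\{i,j\}})$.
   Context: Let $G$ be a finite simple graph in which each edge $uv$ has a weight $w_{uv}\in(0,1)$. Weighted zero forcing: start with a set $B\subseteq V(G)$ of blue vertices, all other vertices white. In each round, simultaneously, for every blue vertex $u$ that has exactly one white neighbor $v$ (with respect to the coloring at the start of the round), $u$ attempts to force $v$, succeeding with probability $w_{uv}$, all attempts being independent; a white vertex becomes blue at the end of the round if at least one attempt on it succeeds. $B$ is a weighted zero forcing set of $G$ if this process can eventually color all of $V(G)$ blue (equivalently, $B$ is a zero forcing set of the underlying unweighted graph under the standard rule); $\operatorname{Z}(G)$ is the minimum size of such a set. $\operatorname{ptw}(G,B)$ is the random variable giving the round in which the last white vertex becomes blue ($0$ if $B=V(G)$). For $\alpha\in(0,1)$, $\operatorname{cptw}(G,B,\alpha)$ is the least $t\ge 0$ with $\Pr(\operatorname{ptw}(G,B)\le t)\ge\alpha$, and $\operatorname{cptw}(G,\alpha)$ is the minimum of $\operatorname{cptw}(G,B,\alpha)$ over weighted zero forcing sets $B$ with $|B|=\operatorname{Z}(G)$. *)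

theory Defs
  imports "HOL-Probability.Probability"
begin

text \<open>A finite simple graph is given by a finite vertex set V and a symmetric,
irreflexive adjacency relation E (only its restriction to V matters).
Edge weights are given by w :: 'a set => real, evaluated on 2-sets {u,v}.\<close>

definition nbrs :: "'a set \<Rightarrow> ('a \<Rightarrow> 'a \<Rightarrow> bool) \<Rightarrow> 'a \<Rightarrow> 'a set" where
  "nbrs V E u = {v \<in> V. E u v}"

inductive_set zf_closure :: "'a set \<Rightarrow> ('a \<Rightarrow> 'a \<Rightarrow> bool) \<Rightarrow> 'a set \<Rightarrow> 'a set"
  for V E B where
  base: "x \<in> B \<Longrightarrow> x \<in> zf_closure V E B"
| force: "\<lbrakk> u \<in> V; u \<in> zf_closure V E B; v \<in> nbrs V E u;
            \<forall>x \<in> nbrs V E u. x \<noteq> v \<longrightarrow> x \<in> zf_closure V E B \<rbrakk> \<Longrightarrow> v \<in> zf_closure V E B"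

definition zero_forcing_set :: "'a set \<Rightarrow> ('a \<Rightarrow> 'a \<Rightarrow> bool) \<Rightarrow> 'a set \<Rightarrow> bool" where
  "zero_forcing_set V E B \<longleftrightarrow> B \<subseteq> V \<and> V \<subseteq> zf_closure V E B"

definition Z_num :: "'a set \<Rightarrow> ('a \<Rightarrow> 'a \<Rightarrow> bool) \<Rightarrow> nat" where
  "Z_num V E = (LEAST k. \<exists>B. zero_forcing_set V E B \<and> card B = k)"

definition attempts :: "'a set \<Rightarrow> ('a \<Rightarrow> 'a \<Rightarrow> bool) \<Rightarrow> 'a set \<Rightarrow> ('a \<times> 'a) set" where
  "attempts V E S = {(u, v). u \<in> S \<and> u \<in> V \<and> nbrs V E u - S = {v}}"

text \<open>One round: every attempt (u,v) succeeds independently with probability w{u,v};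
a white vertex turns blue iff some attempt on it succeeds.\<close>
definition wzf_step :: "'a set \<Rightarrow> ('a \<Rightarrow> 'a \<Rightarrow> bool) \<Rightarrow> ('a set \<Rightarrow> real) \<Rightarrow> 'a set \<Rightarrow> 'a set pmf" where
  "wzf_step V E w S =
     map_pmf (\<lambda>succ. S \<union> {v. \<exists>u. (u, v) \<in> attempts V E S \<and> succ (u, v)})
       (Pi_pmf (attempts V E S) False (\<lambda>(u, v). bernoulli_pmf (w {u, v})))"

fun wzf_run :: "'a set \<Rightarrow> ('a \<Rightarrow> 'a \<Rightarrow> bool) \<Rightarrow> ('a set \<Rightarrow> real) \<Rightarrow> 'a set \<Rightarrow> nat \<Rightarrow> 'a set pmf" where
  "wzf_run V E w B 0 = return_pmf B"
| "wzf_run V E w B (Suc t) = bind_pmf (wzf_run V E w B t) (wzf_step V E w)"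

text \<open>Pr(ptw(G,B) <= t) = probability that all vertices are blue after t rounds.\<close>
definition prob_ptw_le :: "'a set \<Rightarrow> ('a \<Rightarrow> 'a \<Rightarrow> bool) \<Rightarrow> ('a set \<Rightarrow> real) \<Rightarrow> 'a set \<Rightarrow> nat \<Rightarrow> real" where
  "prob_ptw_le V E w B t = measure_pmf.prob (wzf_run V E w B t) {S. V \<subseteq> S}"

definition cptw_set :: "'a set \<Rightarrow> ('a \<Rightarrow> 'a \<Rightarrow> bool) \<Rightarrow> ('a set \<Rightarrow> real) \<Rightarrow> 'a set \<Rightarrow> real \<Rightarrow> nat" where
  "cptw_set V E w B \<alpha> = (LEAST t. prob_ptw_le V E w B t \<ge> \<alpha>)"

definition cptw :: "'a set \<Rightarrow> ('a \<Rightarrow> 'a \<Rightarrow> bool) \<Rightarrow> ('a set \<Rightarrow> real) \<Rightarrow> real \<Rightarrow> nat" where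
  "cptw V E w \<alpha> = Min {cptw_set V E w B \<alpha> | B. zero_forcing_set V E B \<and> card B = Z_num V E}"

definition K_adj :: "nat \<Rightarrow> nat \<Rightarrow> bool" where
  "K_adj i j \<longleftrightarrow> i \<noteq> j"

end

theory Submission
  imports Defs
begin

lemma nbrs_K: "nbrs (V::nat set) K_adj u = V - {u}"
  by (auto simp: nbrs_def K_adj_def)

lemma attempts_minus:
  assumes "i \<in> (V::nat set)"
  shows "attempts V K_adj (V - {i}) = (\<lambda>u. (u, i)) ` (V - {i})"
  using assms by (auto simp: attempts_def nbrs_K)

lemma attempts_full: "attempts (V::nat set) K_adj V = {}"
  by (auto simp: attempts_def nbrs_K)

lemma step_full: "wzf_step (V::nat set) K_adj w V = return_pmf V"
  by (simp add: wzf_step_def attempts_full)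

lemma step_minus_set:
  assumes "i \<in> (V::nat set)"
  shows "set_pmf (wzf_step V K_adj w (V - {i})) \<subseteq> {V - {i}, V}"
proof -
  have "\<And>succ. (V - {i}) \<union> {v. \<exists>u. (u, v) \<in> attempts V K_adj (V - {i}) \<and> succ (u, v)} \<in> {V - {i}, V}"
  proof -
    fix succ :: "nat \<times> nat \<Rightarrow> bool"
    have "{v. \<exists>u. (u, v) \<in> attempts V K_adj (V - {i}) \<and> succ (u, v)} \<subseteq> {i}"
      using assms by (auto simp: attempts_minus)
    then have "{v. \<exists>u. (u, v) \<in> attempts V K_adj (V - {i}) \<and> succ (u, v)} = {} \<or>
               {v. \<exists>u. (u, v) \<in> attempts V K_adj (V - {i}) \<and> succ (u, v)} = {i}" by blast
    then show "(V - {i}) \<union> {v. \<exists>u. (u, v) \<in> attempts V K_adj (V - {i}) \<and> succ (u, v)} \<in> {V - {i}, V}"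
      using assms by auto
  qed
  then show ?thesis unfolding wzf_step_def by auto
qed

lemma step_minus_pmf:
  assumes "i \<in> (V::nat set)" "finite V"
    and w: "\<And>u. u \<in> V - {i} \<Longrightarrow> 0 \<le> w {i, u} \<and> w {i, u} \<le> 1"
  shows "pmf (wzf_step V K_adj w (V - {i})) (V - {i}) = (\<Prod>u\<in>V - {i}. 1 - w {i, u})"
proof -
  let ?A = "attempts V K_adj (V - {i})"
  let ?g = "\<lambda>succ. (V - {i}) \<union> {v. \<exists>u. (u, v) \<in> ?A \<and> succ (u, v)}"
  have A: "?A = (\<lambda>u. (u, i)) ` (V - {i})" using assms(1) by (rule attempts_minus)
  have fA: "finite ?A" using A assms(2) by simp
  have pre: "?g -` {V - {i}} = Pi ?A (\<lambda>_. {False})"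
    using assms(1) by (auto simp: A)
  have "pmf (wzf_step V K_adj w (V - {i})) (V - {i}) =
      measure_pmf.prob (Pi_pmf ?A False (\<lambda>(u, v). bernoulli_pmf (w {u, v}))) (?g -` {V - {i}})"
    unfolding wzf_step_def by (simp add: pmf_map)
  also have "\<dots> = (\<Prod>x\<in>?A. measure_pmf.prob ((\<lambda>(u, v). bernoulli_pmf (w {u, v})) x) {False})"
    unfolding pre by (rule measure_Pi_pmf_Pi[OF fA])
  also have "\<dots> = (\<Prod>u\<in>V - {i}. measure_pmf.prob (bernoulli_pmf (w {u, i})) {False})"
    unfolding A by (subst prod.reindex) (auto simp: inj_on_def)
  also have "\<dots> = (\<Prod>u\<in>V - {i}. 1 - w {i, u})"
  proof (rule prod.cong)
    fix u assume u: "u \<in> V - {i}"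
    have e: "{u, i} = {i, u}" by auto
    show "measure_pmf.prob (bernoulli_pmf (w {u, i})) {False} = 1 - w {i, u}"
      using w[OF u] by (simp add: e measure_pmf_single)
  qed simp
  finally show ?thesis .
qed

lemma run_minus:
  assumes "i \<in> (V::nat set)" "finite V"
    and w: "\<And>u. u \<in> V - {i} \<Longrightarrow> 0 \<le> w {i, u} \<and> w {i, u} \<le> 1"
  shows "set_pmf (wzf_run V K_adj w (V - {i}) t) \<subseteq> {V - {i}, V} \<and>
         pmf (wzf_run V K_adj w (V - {i}) t) (V - {i}) = (\<Prod>u\<in>V - {i}. 1 - w {i, u}) ^ t"
proof (induction t)
  case 0
  then show ?case by auto
next
  case (Suc t)
  let ?p = "wzf_run V K_adj w (V - {i}) t"
  let ?P = "(\<Prod>u\<in>V - {i}. 1 - w {i, u})"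
  have ne: "V - {i} \<noteq> V" using assms(1) by auto
  have set1: "set_pmf (bind_pmf ?p (wzf_step V K_adj w)) \<subseteq> {V - {i}, V}"
  proof -
    have "\<And>x. x \<in> set_pmf ?p \<Longrightarrow> set_pmf (wzf_step V K_adj w x) \<subseteq> {V - {i}, V}"
    proof -
      fix x assume "x \<in> set_pmf ?p"
      then have "x = V - {i} \<or> x = V" using Suc.IH by auto
      then show "set_pmf (wzf_step V K_adj w x) \<subseteq> {V - {i}, V}"
        using step_minus_set[OF assms(1)] by (auto simp: step_full)
    qed
    then show ?thesis by (auto simp: set_bind_pmf)
  qed
  have "pmf (bind_pmf ?p (wzf_step V K_adj w)) (V - {i}) =
        (\<integral>x. pmf (wzf_step V K_adj w x) (V - {i}) \<partial>measure_pmf ?p)"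
    by (rule pmf_bind)
  also have "\<dots> = (\<Sum>a\<in>{V - {i}, V}. pmf (wzf_step V K_adj w a) (V - {i}) * pmf ?p a)"
    by (rule integral_measure_pmf_real) (use Suc.IH in auto)
  also have "\<dots> = ?P * ?P ^ t"
  proof -
    have st: "pmf (wzf_step V K_adj w (V - {i})) (V - {i}) = ?P"
      by (rule step_minus_pmf[OF assms(1,2)]) (rule w)
    show ?thesis using ne Suc.IH by (simp add: step_full st)
  qed
  finally show ?case using set1 by simp
qed

lemma prob_minus:
  assumes "i \<in> (V::nat set)" "finite V"
    and w: "\<And>u. u \<in> V - {i} \<Longrightarrow> 0 \<le> w {i, u} \<and> w {i, u} \<le> 1"
  shows "prob_ptw_le V K_adj w (V - {i}) t = 1 - (\<Prod>u\<in>V - {i}. 1 - w {i, u}) ^ t"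
proof -
  let ?p = "wzf_run V K_adj w (V - {i}) t"
  note R = run_minus[where t=t and V=V and i=i and w=w, OF assms(1,2) w]
  have "measure_pmf.prob ?p (UNIV - {S. V \<subseteq> S}) = 1 - measure_pmf.prob ?p {S. V \<subseteq> S}"
    using measure_pmf.prob_compl[of "{S. V \<subseteq> S}" ?p] by simp
  moreover have "measure_pmf.prob ?p (UNIV - {S. V \<subseteq> S}) = pmf ?p (V - {i})"
  proof -
    have "(UNIV - {S. V \<subseteq> S}) \<inter> set_pmf ?p = {V - {i}} \<inter> set_pmf ?p"
      using R assms(1) by auto
    then have "measure_pmf.prob ?p (UNIV - {S. V \<subseteq> S}) = measure_pmf.prob ?p {V - {i}}"
      by (metis measure_Int_set_pmf)
    then show ?thesis by (simp add: measure_pmf_single)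
  qed
  ultimately show ?thesis unfolding prob_ptw_le_def using R by simp
qed


lemma closure_small:
  assumes "B \<subseteq> (V::nat set)" "finite V" "card (V - B) \<ge> 2"
  shows "zf_closure V K_adj B \<subseteq> B"
proof
  fix x assume "x \<in> zf_closure V K_adj B"
  then show "x \<in> B"
  proof (induction rule: zf_closure.induct)
    case (base x) then show ?case .
  next
    case (force u v)
    have "\<not> (V - B) \<subseteq> {v}"
      using assms(3) card_mono[of "{v}" "V - B"] by auto
    then obtain c where c: "c \<in> V - B" "c \<noteq> v" by auto
    have "c \<in> nbrs V K_adj u" using c force(4) by (auto simp: nbrs_K)
    then have "c \<in> B" using force c by auto
    then show ?case using c by auto
  qed
qed

lemma zfs_minus:
  assumes "i \<in> {1..n}" "n \<ge> 2"
  shows "zero_forcing_set {1..n} K_adj ({1..n} - {i})"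
  unfolding zero_forcing_set_def
proof (intro conjI subsetI)
  fix x assume x: "x \<in> {1..n}"
  show "x \<in> zf_closure {1..n} K_adj ({1..n} - {i})"
  proof (cases "x = i")
    case False then show ?thesis using x by (auto intro: zf_closure.base)
  next
    case True
    define u where "u = (if i = 1 then 2 else (1::nat))"
    have u: "u \<in> {1..n}" "u \<noteq> i" using assms unfolding u_def by auto
    show ?thesis unfolding True
      by (rule zf_closure.force[of u]) (use u assms in \<open>auto simp: nbrs_K intro: zf_closure.base\<close>)
  qed
qed auto

lemma zfs_card:
  assumes "zero_forcing_set {1..n} K_adj B"
  shows "card ({1..n} - B) \<le> 1"
proof (rule ccontr)
  assume "\<not> ?thesis"
  then have "card ({1..n} - B) \<ge> 2" by simp
  then have "zf_closure {1..n} K_adj B \<subseteq> B"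
    using assms by (intro closure_small) (auto simp: zero_forcing_set_def)
  then have "{1..n} - B = {}" using assms unfolding zero_forcing_set_def by blast
  then have "card ({1..n} - B) = 0" by (simp only: card.empty)
  then show False using \<open>card _ \<ge> 2\<close> by linarith
qed

lemma Z_K:
  assumes "n \<ge> 2"
  shows "Z_num {1..n} K_adj = n - 1"
  unfolding Z_num_def
proof (rule Least_equality)
  show "\<exists>B. zero_forcing_set {1..n} K_adj B \<and> card B = n - 1"
    using zfs_minus[of 1 n] assms by (intro exI[of _ "{1..n} - {1}"]) auto
next
  fix k assume "\<exists>B. zero_forcing_set {1..n} K_adj B \<and> card B = k"
  then obtain B where B: "zero_forcing_set {1..n} K_adj B" "card B = k" by auto
  have sub: "B \<subseteq> {1..n}" using B by (simp add: zero_forcing_set_def)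
  have "card ({1..n} - B) = n - card B" using sub by (simp add: card_Diff_subset finite_subset)
  then show "n - 1 \<le> k" using zfs_card[OF B(1)] B(2) by simp
qed

lemma zfs_Z_iff:
  assumes "n \<ge> 2"
  shows "{B. zero_forcing_set {1..n} K_adj B \<and> card B = Z_num {1..n} K_adj} =
         (\<lambda>i. {1..n} - {i}) ` {1..n}"
proof (intro equalityI subsetI)
  fix B assume "B \<in> {B. zero_forcing_set {1..n} K_adj B \<and> card B = Z_num {1..n} K_adj}"
  then have B: "zero_forcing_set {1..n} K_adj B" "card B = n - 1" using Z_K[OF assms] by auto
  have sub: "B \<subseteq> {1..n}" using B by (simp add: zero_forcing_set_def)
  have "card ({1..n} - B) = 1" using sub B(2) assms by (simp add: card_Diff_subset finite_subset)
  then obtain i where i: "{1..n} - B = {i}" by (auto simp: card_Suc_eq)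
  then have "B = {1..n} - {i}" "i \<in> {1..n}" using sub by auto
  then show "B \<in> (\<lambda>i. {1..n} - {i}) ` {1..n}" by auto
next
  fix B assume "B \<in> (\<lambda>i. {1..n} - {i}) ` {1..n}"
  then obtain i where i: "i \<in> {1..n}" "B = {1..n} - {i}" by auto
  then show "B \<in> {B. zero_forcing_set {1..n} K_adj B \<and> card B = Z_num {1..n} K_adj}"
    using zfs_minus[OF i(1) assms] Z_K[OF assms] by auto
qed

lemma least_pow:
  fixes P \<alpha> :: real
  assumes "0 < P" "P < 1" "0 < \<alpha>" "\<alpha> < 1"
  shows "(LEAST t::nat. 1 - P ^ t \<ge> \<alpha>) = nat \<lceil>ln (1 - \<alpha>) / ln P\<rceil>"
proof -
  have lP: "ln P < 0" using assms by simp
  have key: "\<alpha> \<le> 1 - P ^ t \<longleftrightarrow> nat \<lceil>ln (1 - \<alpha>) / ln P\<rceil> \<le> t" for t :: nat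
  proof -
    have "\<alpha> \<le> 1 - P ^ t \<longleftrightarrow> P ^ t \<le> 1 - \<alpha>" by linarith
    also have "\<dots> \<longleftrightarrow> ln (P ^ t) \<le> ln (1 - \<alpha>)"
      by (rule ln_le_cancel_iff[symmetric]) (use assms in auto)
    also have "ln (P ^ t) = real t * ln P" using assms(1) by (metis ln_realpow)
    also have "real t * ln P \<le> ln (1 - \<alpha>) \<longleftrightarrow> ln (1 - \<alpha>) / ln P \<le> real t"
      using neg_divide_le_eq[OF lP, of "ln (1 - \<alpha>)" "real t"] by simp
    also have "\<dots> \<longleftrightarrow> \<lceil>ln (1 - \<alpha>) / ln P\<rceil> \<le> int t" by (simp add: ceiling_le_iff)
    also have "\<dots> \<longleftrightarrow> nat \<lceil>ln (1 - \<alpha>) / ln P\<rceil> \<le> t" by linarith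
    finally show ?thesis .
  qed
  show ?thesis by (rule Least_equality) (use key in blast)+
qed

theorem mainTheorem7:
  fixes n :: nat and w :: "nat set \<Rightarrow> real" and \<alpha> :: real
  assumes "n \<ge> 2"
    and "\<And>i j. i \<in> {1..n} \<Longrightarrow> j \<in> {1..n} \<Longrightarrow> i \<noteq> j \<Longrightarrow> 0 < w {i, j} \<and> w {i, j} < 1"
    and "0 < \<alpha>" and "\<alpha> < 1"
  shows "int (cptw {1..n} K_adj w \<alpha>) =
    \<lceil>log (Min ((\<lambda>i. \<Prod>j\<in>{1..n} - {i}. 1 - w {i, j}) ` {1..n})) (1 - \<alpha>)\<rceil>"
proof -
  define V :: "nat set" where "V = {1..n}"
  define P where "P = (\<lambda>i. \<Prod>j\<in>V - {i}. 1 - w {i, j})"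
  define c where "c = (\<lambda>i. nat \<lceil>ln (1 - \<alpha>) / ln (P i)\<rceil>)"
  have fV: "finite V" "V \<noteq> {}" using assms(1) by (auto simp: V_def)
  have P01: "0 < P i \<and> P i < 1" if i: "i \<in> V" for i
  proof -
    have ne: "V - {i} \<noteq> {}"
    proof -
      have "(if i = 1 then 2 else (1::nat)) \<in> V - {i}" using i assms(1) unfolding V_def by auto
      then show ?thesis by blast
    qed
    have pos: "0 < P i" unfolding P_def
      by (rule prod_pos) (use i assms(2) in \<open>auto simp: V_def\<close>)
    obtain j0 where j0: "j0 \<in> V - {i}" using ne by auto
    have wj: "0 < w {i, j} \<and> w {i, j} < 1" if "j \<in> V - {i}" for j
      using assms(2) i that by (auto simp: V_def)
    have "P i = (1 - w {i, j0}) * (\<Prod>j\<in>V - {i} - {j0}. 1 - w {i, j})"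
      unfolding P_def using fV j0 by (simp add: prod.remove)
    moreover have "(\<Prod>j\<in>V - {i} - {j0}. 1 - w {i, j}) \<le> 1"
      by (rule prod_le_1) (use wj in \<open>auto simp: less_imp_le\<close>)
    moreover have "0 < 1 - w {i, j0}" "1 - w {i, j0} < 1" using wj[OF j0] by auto
    ultimately have "P i \<le> 1 - w {i, j0}" by (simp add: mult_left_le)
    then have "P i < 1" using \<open>1 - w {i, j0} < 1\<close> by linarith
    with pos show ?thesis by simp
  qed
  have cs: "cptw_set V K_adj w (V - {i}) \<alpha> = c i" if i: "i \<in> V" for i
  proof -
    have "prob_ptw_le V K_adj w (V - {i}) t = 1 - P i ^ t" for t
      unfolding P_def
      by (rule prob_minus[OF i fV(1)]) (use i assms(2) in \<open>auto simp: V_def less_imp_le\<close>)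
    then show ?thesis unfolding cptw_set_def c_def
      using least_pow[OF _ _ assms(3,4), of "P i"] P01[OF i] by simp
  qed
  have set_eq: "{cptw_set V K_adj w B \<alpha> | B. zero_forcing_set V K_adj B \<and> card B = Z_num V K_adj}
      = c ` V"
  proof -
    have "{cptw_set V K_adj w B \<alpha> | B. zero_forcing_set V K_adj B \<and> card B = Z_num V K_adj}
       = (\<lambda>B. cptw_set V K_adj w B \<alpha>) ` {B. zero_forcing_set V K_adj B \<and> card B = Z_num V K_adj}"
      by auto
    also have "\<dots> = (\<lambda>B. cptw_set V K_adj w B \<alpha>) ` ((\<lambda>i. V - {i}) ` V)"
      unfolding V_def using zfs_Z_iff[OF assms(1)] by simp
    also have "\<dots> = c ` V" using cs by (auto simp: image_image)
    finally show ?thesis .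
  qed
  have "Min (P ` V) \<in> P ` V" using fV by simp
  then obtain i0 where i0: "i0 \<in> V" "P i0 = Min (P ` V)" by auto
  have mono: "c i0 \<le> c i" if i: "i \<in> V" for i
  proof -
    have le: "P i0 \<le> P i" using i0 i fV by simp
    have l0: "ln (P i0) \<le> ln (P i)" using le P01[OF i0(1)] by simp
    have n0: "ln (P i0) < 0" "ln (P i) < 0" using P01[OF i] P01[OF i0(1)] by auto
    have na: "ln (1 - \<alpha>) < 0" using assms(3,4) by simp
    have "ln (1 - \<alpha>) / ln (P i0) \<le> ln (1 - \<alpha>) / ln (P i)"
    proof -
      have "(- ln (1 - \<alpha>)) / (- ln (P i0)) \<le> (- ln (1 - \<alpha>)) / (- ln (P i))"
      proof (rule divide_left_mono)
        show "- ln (P i) \<le> - ln (P i0)" using l0 by simp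
        show "0 \<le> - ln (1 - \<alpha>)" using na by simp
        show "0 < - ln (P i0) * - ln (P i)" using n0 by (intro mult_pos_pos) auto
      qed
      then show ?thesis by simp
    qed
    then show ?thesis unfolding c_def by (intro nat_mono ceiling_mono)
  qed
  have minc: "Min (c ` V) = c i0"
    by (rule Min_eqI) (use fV i0 mono in auto)
  have pos: "0 < ln (1 - \<alpha>) / ln (P i0)"
    using P01[OF i0(1)] assms(3,4) by (simp add: divide_neg_neg)
  have "int (cptw V K_adj w \<alpha>) = int (c i0)"
    unfolding cptw_def set_eq minc ..
  also have "\<dots> = \<lceil>ln (1 - \<alpha>) / ln (P i0)\<rceil>" unfolding c_def using pos by simp
  also have "\<dots> = \<lceil>log (Min (P ` V)) (1 - \<alpha>)\<rceil>" unfolding log_def i0(2) ..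
  finally have "int (cptw V K_adj w \<alpha>) = \<lceil>log (Min (P ` V)) (1 - \<alpha>)\<rceil>" .
  then show ?thesis by (simp only: P_def V_def)
qed

end
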